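(* In the 2-TBSG setting below, let $\widehat{\pi}=(\widehat{\pi}_1,\widehat{\pi}_2)$ be an $\epsilon_{\mathrm{PS}}$-optimal policy in $\widehat{\mathcal{G}}$. Then, componentwise, $$-\Big(\|Q^{\widehat{c}(\pi_2^* ),\pi_2^*}-\widehat{Q}^{\widehat{c}(\pi_2^* ),\pi_2^*}\|_\infty+\|Q^{\widehat{\pi}_1,\widehat{\pi}_2}-\widehat{Q}^{\widehat{\pi}_1,\widehat{\pi}_2}\|_\infty+\epsilon_{\mathrm{PS}}\Big)\mathbf{1}\le Q^*-Q^{\widehat{\pi}_1,\widehat{\pi}_2}$$ $$\le\Big(\|Q^{\pi_1^*,\widehat{c}(\pi_1^* )}-\widehat{Q}^{\pi_1^*,\widehat{c}(\pi_1^* )}\|_\infty+\|Q^{\widehat{\pi}_1,\widehat{\pi}_2}-\widehat{Q}^{\widehat{\pi}_1,\widehat{\pi}_2}\|_\infty+\epsilon_{\mathrm{PS}}\Big)\mathbf{1}.$$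
   Context: A 2-TBSG $\mathcal{G}=(\mathcal{S}_1,\mathcal{S}_2,\mathcal{A},P,r,\gamma)$: finite $\mathcal{S}=\mathcal{S}_1\sqcup\mathcal{S}_2$, finite $\mathcal{A}$, kernel $P$, reward $r\in[0,1]$, $\gamma\in(0,1)$; player 1 (maximizer) uses $\pi_1:\mathcal{S}_1\to\mathcal{A}$, player 2 (minimizer) uses $\pi_2:\mathcal{S}_2\to\mathcal{A}$; for $\pi=(\pi_1,\pi_2)$, $V^\pi(s)=\mathbb{E}[\sum_t\gamma^tr(s^t,\pi(s^t))|s^0=s]$, $Q^\pi(s,a)=r(s,a)+\gamma\sum_{s'}P(s'|s,a)V^\pi(s')$. Counter (best-response) policies: $c(\pi_2)$ is a player-1 policy with $V^{c(\pi_2),\pi_2}=\max_{\pi_1}V^{\pi_1,\pi_2}$ at every state; $c(\pi_1)$ is a player-2 policy with $V^{\pi_1,c(\pi_1)}=\min_{\pi_2}V^{\pi_1,\pi_2}$ at every state. $\pi^*=(\pi_1^*,\pi_2^* )$ is a Nash equilibrium of $\mathcal{G}$ ($\pi_1^*=c(\pi_2^* )$, $\pi_2^*=c(\pi_1^* )$) and $Q^*=Q^{\pi^*}$. $P$ has linear representation $P(s'|s,a)=\sum_k\phi_k(s,a)\psi_k(s')$ satisfying the anchor-state assumption (anchors $(s_k,a_k)$, $\lambda_k^{s,a}\ge0$, $\sum_k\lambda_k^{s,a}=1$, $\phi(s,a)=\sum_k\lambda_k^{s,a}\phi(s_k,a_k)$); the empirical game $\widehat{\mathcal{G}}$ has kernel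 $\widehat{P}(s'|s,a)=\sum_k\lambda_k^{s,a}\widehat{P}_\mathcal{K}(s'|s_k,a_k)$, $\widehat{P}_\mathcal{K}(\cdot|s_k,a_k)$ the empirical distribution of $N$ samples from $P(\cdot|s_k,a_k)$. Hatted quantities ($\widehat{Q}^\pi$, $\widehat{Q}^*$, counter policies $\widehat{c}$) refer to $\widehat{\mathcal{G}}$. $\widehat{\pi}$ is $\epsilon_{\mathrm{PS}}$-optimal in $\widehat{\mathcal{G}}$ if $|\widehat{Q}^{\widehat{\pi}}-\widehat{Q}^*|\le\epsilon_{\mathrm{PS}}$ componentwise. $\mathbf{1}$ is the all-ones vector. *)

theory Defs
  imports "HOL-Analysis.Analysis"
begin

text \<open>A transition kernel is
  P s a s' = probability of moving to s' from s under action a.\<close>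

definition is_kernel :: "('s::finite \<Rightarrow> 'a \<Rightarrow> 's \<Rightarrow> real) \<Rightarrow> bool" where
  "is_kernel P \<longleftrightarrow> (\<forall>s a s'. 0 \<le> P s a s') \<and> (\<forall>s a. (\<Sum>s'\<in>UNIV. P s a s') = 1)"

definition joint :: "'s set \<Rightarrow> ('s \<Rightarrow> 'a) \<Rightarrow> ('s \<Rightarrow> 'a) \<Rightarrow> 's \<Rightarrow> 'a" where
  "joint S1 pi1 pi2 s = (if s \<in> S1 then pi1 s else pi2 s)"

fun mpow :: "('s::finite \<Rightarrow> 'a \<Rightarrow> 's \<Rightarrow> real) \<Rightarrow> ('s \<Rightarrow> 'a) \<Rightarrow> nat \<Rightarrow> 's \<Rightarrow> 's \<Rightarrow> real" where
  "mpow P pol 0 s s' = (if s = s' then 1 else 0)"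
| "mpow P pol (Suc t) s s' = (\<Sum>u\<in>UNIV. mpow P pol t s u * P u (pol u) s')"

definition Vf :: "('s::finite \<Rightarrow> 'a \<Rightarrow> 's \<Rightarrow> real) \<Rightarrow> ('s \<Rightarrow> 'a \<Rightarrow> real) \<Rightarrow> real
    \<Rightarrow> ('s \<Rightarrow> 'a) \<Rightarrow> 's \<Rightarrow> real" where
  "Vf P r \<gamma> pol s = (\<Sum>t. \<gamma> ^ t * (\<Sum>s'\<in>UNIV. mpow P pol t s s' * r s' (pol s')))"

definition Qf :: "('s::finite \<Rightarrow> 'a \<Rightarrow> 's \<Rightarrow> real) \<Rightarrow> ('s \<Rightarrow> 'a \<Rightarrow> real) \<Rightarrow> real
    \<Rightarrow> ('s \<Rightarrow> 'a) \<Rightarrow> 's \<Rightarrow> 'a \<Rightarrow> real" where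
  "Qf P r \<gamma> pol s a = r s a + \<gamma> * (\<Sum>s'\<in>UNIV. P s a s' * Vf P r \<gamma> pol s')"

definition is_counter1 :: "('s::finite \<Rightarrow> 'a \<Rightarrow> 's \<Rightarrow> real) \<Rightarrow> ('s \<Rightarrow> 'a \<Rightarrow> real) \<Rightarrow> real
    \<Rightarrow> 's set \<Rightarrow> ('s \<Rightarrow> 'a) \<Rightarrow> ('s \<Rightarrow> 'a) \<Rightarrow> bool" where
  "is_counter1 P r \<gamma> S1 pi2 c1 \<longleftrightarrow>
     (\<forall>pi1 s. Vf P r \<gamma> (joint S1 pi1 pi2) s \<le> Vf P r \<gamma> (joint S1 c1 pi2) s)"

definition is_counter2 :: "('s::finite \<Rightarrow> 'a \<Rightarrow> 's \<Rightarrow> real) \<Rightarrow> ('s \<Rightarrow> 'a \<Rightarrow> real) \<Rightarrow> real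
    \<Rightarrow> 's set \<Rightarrow> ('s \<Rightarrow> 'a) \<Rightarrow> ('s \<Rightarrow> 'a) \<Rightarrow> bool" where
  "is_counter2 P r \<gamma> S1 pi1 c2 \<longleftrightarrow>
     (\<forall>pi2 s. Vf P r \<gamma> (joint S1 pi1 c2) s \<le> Vf P r \<gamma> (joint S1 pi1 pi2) s)"

definition is_nash :: "('s::finite \<Rightarrow> 'a \<Rightarrow> 's \<Rightarrow> real) \<Rightarrow> ('s \<Rightarrow> 'a \<Rightarrow> real) \<Rightarrow> real
    \<Rightarrow> 's set \<Rightarrow> ('s \<Rightarrow> 'a) \<Rightarrow> ('s \<Rightarrow> 'a) \<Rightarrow> bool" where
  "is_nash P r \<gamma> S1 pi1 pi2 \<longleftrightarrow> is_counter1 P r \<gamma> S1 pi2 pi1 \<and> is_counter2 P r \<gamma> S1 pi1 pi2"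

definition supnorm :: "('s::finite \<Rightarrow> 'a::finite \<Rightarrow> real) \<Rightarrow> real" where
  "supnorm f = Max (range (\<lambda>(s, a). \<bar>f s a\<bar>))"

definition empirical :: "nat \<Rightarrow> (nat \<Rightarrow> 's) \<Rightarrow> 's \<Rightarrow> real" where
  "empirical N smp s' = real (card {i. i < N \<and> smp i = s'}) / real N"

end

theory Submission
  imports Defs
begin

lemma Q_mono:
  assumes "\<forall>s a s'. 0 \<le> K s a s'" "0 \<le> \<gamma>" "\<forall>s. Vf K r \<gamma> p1 s \<le> Vf K r \<gamma> p2 s"
  shows "Qf K r \<gamma> p1 s a \<le> Qf K r \<gamma> p2 s a"
proof -
  have "(\<Sum>s'\<in>UNIV. K s a s' * Vf K r \<gamma> p1 s') \<le> (\<Sum>s'\<in>UNIV. K s a s' * Vf K r \<gamma> p2 s')"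
    by (rule sum_mono) (simp add: assms mult_left_mono)
  then show ?thesis unfolding Qf_def using assms(2) by (simp add: mult_left_mono)
qed

lemma supnorm_ge: "\<bar>f s a\<bar> \<le> supnorm (f::'s::finite \<Rightarrow> 'a::finite \<Rightarrow> real)"
  unfolding supnorm_def by (rule Max_ge) auto


theorem lemma26:
  fixes P :: "'s::finite \<Rightarrow> 'a::finite \<Rightarrow> 's \<Rightarrow> real"
    and r :: "'s \<Rightarrow> 'a \<Rightarrow> real" and \<gamma> :: real and S1 :: "'s set"
    and \<phi> :: "'s \<Rightarrow> 'a \<Rightarrow> 'k::finite \<Rightarrow> real" and \<psi> :: "'k \<Rightarrow> 's \<Rightarrow> real"
    and sk :: "'k \<Rightarrow> 's" and ak :: "'k \<Rightarrow> 'a" and lam :: "'s \<Rightarrow> 'a \<Rightarrow> 'k \<Rightarrow> real"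
    and N :: nat and smp :: "'k \<Rightarrow> nat \<Rightarrow> 's"
    and Ph :: "'s \<Rightarrow> 'a \<Rightarrow> 's \<Rightarrow> real"
    and pi1s pi2s pih1 pih2 pihs1 pihs2 c1h c2h :: "'s \<Rightarrow> 'a"
    and \<epsilon> :: real
  assumes kernel: "is_kernel P"
    and reward: "\<forall>s a. 0 \<le> r s a \<and> r s a \<le> 1"
    and gamma: "0 < \<gamma>" "\<gamma> < 1"
    and linear: "\<forall>s a s'. P s a s' = (\<Sum>k\<in>UNIV. \<phi> s a k * \<psi> k s')"
    and anchor_nonneg: "\<forall>s a k. 0 \<le> lam s a k"
    and anchor_sum: "\<forall>s a. (\<Sum>k\<in>UNIV. lam s a k) = 1"
    and anchor_comb: "\<forall>s a j. \<phi> s a j = (\<Sum>k\<in>UNIV. lam s a k * \<phi> (sk k) (ak k) j)"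
    and N_pos: "0 < N"
    and Ph_def: "\<forall>s a s'. Ph s a s' = (\<Sum>k\<in>UNIV. lam s a k * empirical N (smp k) s')"
    and nash: "is_nash P r \<gamma> S1 pi1s pi2s"
    and nash_hat: "is_nash Ph r \<gamma> S1 pihs1 pihs2"
    and eps_opt: "\<forall>s a. \<bar>Qf Ph r \<gamma> (joint S1 pih1 pih2) s a - Qf Ph r \<gamma> (joint S1 pihs1 pihs2) s a\<bar> \<le> \<epsilon>"
    and c1h: "is_counter1 Ph r \<gamma> S1 pi2s c1h"
    and c2h: "is_counter2 Ph r \<gamma> S1 pi1s c2h"
  shows "\<forall>s a.
    - (supnorm (\<lambda>s a. Qf P r \<gamma> (joint S1 c1h pi2s) s a - Qf Ph r \<gamma> (joint S1 c1h pi2s) s a)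
       + supnorm (\<lambda>s a. Qf P r \<gamma> (joint S1 pih1 pih2) s a - Qf Ph r \<gamma> (joint S1 pih1 pih2) s a)
       + \<epsilon>)
      \<le> Qf P r \<gamma> (joint S1 pi1s pi2s) s a - Qf P r \<gamma> (joint S1 pih1 pih2) s a
    \<and> Qf P r \<gamma> (joint S1 pi1s pi2s) s a - Qf P r \<gamma> (joint S1 pih1 pih2) s a
      \<le> supnorm (\<lambda>s a. Qf P r \<gamma> (joint S1 pi1s c2h) s a - Qf Ph r \<gamma> (joint S1 pi1s c2h) s a)
       + supnorm (\<lambda>s a. Qf P r \<gamma> (joint S1 pih1 pih2) s a - Qf Ph r \<gamma> (joint S1 pih1 pih2) s a)
       + \<epsilon>"
proof (intro allI conjI)
  fix s a
  have Pnn: "\<forall>s a s'. 0 \<le> P s a s'" using kernel unfolding is_kernel_def by blast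
  have emp: "\<And>k s'. 0 \<le> empirical N (smp k) s'" unfolding empirical_def by simp
  have Phnn: "\<forall>s a s'. 0 \<le> Ph s a s'" using Ph_def anchor_nonneg emp
    by (simp add: sum_nonneg)
  have g0: "0 \<le> \<gamma>" using gamma by simp
  let ?Qs = "Qf P r \<gamma> (joint S1 pi1s pi2s) s a"
  let ?Qh = "Qf P r \<gamma> (joint S1 pih1 pih2) s a"
  let ?n1 = "supnorm (\<lambda>s a. Qf P r \<gamma> (joint S1 c1h pi2s) s a - Qf Ph r \<gamma> (joint S1 c1h pi2s) s a)"
  let ?n2 = "supnorm (\<lambda>s a. Qf P r \<gamma> (joint S1 pi1s c2h) s a - Qf Ph r \<gamma> (joint S1 pi1s c2h) s a)"
  let ?nh = "supnorm (\<lambda>s a. Qf P r \<gamma> (joint S1 pih1 pih2) s a - Qf Ph r \<gamma> (joint S1 pih1 pih2) s a)"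
  have eh: "\<bar>Qf P r \<gamma> (joint S1 pih1 pih2) s a - Qf Ph r \<gamma> (joint S1 pih1 pih2) s a\<bar> \<le> ?nh"
    by (rule supnorm_ge[where f="\<lambda>s a. Qf P r \<gamma> (joint S1 pih1 pih2) s a - Qf Ph r \<gamma> (joint S1 pih1 pih2) s a"])
  have e1: "\<bar>Qf P r \<gamma> (joint S1 c1h pi2s) s a - Qf Ph r \<gamma> (joint S1 c1h pi2s) s a\<bar> \<le> ?n1"
    by (rule supnorm_ge[where f="\<lambda>s a. Qf P r \<gamma> (joint S1 c1h pi2s) s a - Qf Ph r \<gamma> (joint S1 c1h pi2s) s a"])
  have e2: "\<bar>Qf P r \<gamma> (joint S1 pi1s c2h) s a - Qf Ph r \<gamma> (joint S1 pi1s c2h) s a\<bar> \<le> ?n2"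
    by (rule supnorm_ge[where f="\<lambda>s a. Qf P r \<gamma> (joint S1 pi1s c2h) s a - Qf Ph r \<gamma> (joint S1 pi1s c2h) s a"])
  have ep: "\<bar>Qf Ph r \<gamma> (joint S1 pih1 pih2) s a - Qf Ph r \<gamma> (joint S1 pihs1 pihs2) s a\<bar> \<le> \<epsilon>"
    using eps_opt by blast
  have l1: "Qf P r \<gamma> (joint S1 c1h pi2s) s a \<le> ?Qs"
    by (rule Q_mono[OF Pnn g0]) (use nash in \<open>simp add: is_nash_def is_counter1_def\<close>)
  have l2: "Qf Ph r \<gamma> (joint S1 pihs1 pihs2) s a \<le> Qf Ph r \<gamma> (joint S1 c1h pi2s) s a"
  proof (rule Q_mono[OF Phnn g0], rule allI)
    fix x
    have "Vf Ph r \<gamma> (joint S1 pihs1 pihs2) x \<le> Vf Ph r \<gamma> (joint S1 pihs1 pi2s) x"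
      using nash_hat by (simp add: is_nash_def is_counter2_def)
    also have "\<dots> \<le> Vf Ph r \<gamma> (joint S1 c1h pi2s) x"
      using c1h by (simp add: is_counter1_def)
    finally show "Vf Ph r \<gamma> (joint S1 pihs1 pihs2) x \<le> Vf Ph r \<gamma> (joint S1 c1h pi2s) x" .
  qed
  have u1: "?Qs \<le> Qf P r \<gamma> (joint S1 pi1s c2h) s a"
    by (rule Q_mono[OF Pnn g0]) (use nash in \<open>simp add: is_nash_def is_counter2_def\<close>)
  have u2: "Qf Ph r \<gamma> (joint S1 pi1s c2h) s a \<le> Qf Ph r \<gamma> (joint S1 pihs1 pihs2) s a"
  proof (rule Q_mono[OF Phnn g0], rule allI)
    fix x
    have "Vf Ph r \<gamma> (joint S1 pi1s c2h) x \<le> Vf Ph r \<gamma> (joint S1 pi1s pihs2) x"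
      using c2h by (simp add: is_counter2_def)
    also have "\<dots> \<le> Vf Ph r \<gamma> (joint S1 pihs1 pihs2) x"
      using nash_hat by (simp add: is_nash_def is_counter1_def)
    finally show "Vf Ph r \<gamma> (joint S1 pi1s c2h) x \<le> Vf Ph r \<gamma> (joint S1 pihs1 pihs2) x" .
  qed
  show "- (?n1 + ?nh + \<epsilon>) \<le> ?Qs - ?Qh"
    using eh e1 ep l1 l2 by linarith
  show "?Qs - ?Qh \<le> ?n2 + ?nh + \<epsilon>"
    using eh e2 ep u1 u2 by linarith
qed

end
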